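(* For every PMCFG $G$, $L(G)\subseteq L(\mathcal{M}(G))$, where $\mathcal{M}(G)$ is the automaton with respect to $G$.
   Context: Composition functions. Fix variables $x_i^j$ ($i,j\in\mathbb{N}_+$). For $s_1,\dots,s_\ell,s\in\mathbb{N}_+$ a composition function of sort $(s_1\cdots s_\ell,s)$ over $\Sigma$ is given by a tuple $[u_1,\dots,u_s]$ with each $u_i$ a string over $\Sigma\cup\{x_i^j : i\in[\ell], j\in[s_i]\}$; it maps $((w_1^1,\dots,w_1^{s_1}),\dots,(w_\ell^1,\dots,w_\ell^{s_\ell}))$ to the $s$-tuple obtained from $(u_1,\dots,u_s)$ by replacing each $x_i^j$ by $w_i^j$ (variables may occur several times or not at all). PMCFG. $G=(N,\Sigma,I,R)$ with $N$ a finite set of nonterminals each with a sort in $\mathbb{N}_+$, $I$ a set of nonterminals of sort 1, $R$ a finite set of rules $A\to f(A_1,\dots,A_\ell)$ with $f$ of sort $(s_1\cdots s_\ell,s)$, $A$ of sort $s$, $A_i$ of sort $s_i$. Derivations from $A$: $r(d_1,\dots,d_\ell)$ with $r=A\to f(A_1,\dots,A_\ell)\in R$ and $d_i$ derivations from $A_i$; the generated tuple is $f$ applied to the tuples generated by the $d_i$. $L(G)$ = strings generated by derivations from some $S\in I$. Tree stacks and TSA. A tree stack over $\Gamma$ ($@\notin\Gamma$) is $(\xi,\rho)$ with $\xi:\mathbb{N}_+^*\rightharpoonup\Gamma\cup\{@\}$ of finite prefix-closed domain, $\xi(\varepsilon)=@$, labels elsewhere in $\Gamma$, and $\rho\in\mathrm{dom}(\xi)$.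 Predicates: $\mathrm{bottom}$ ($\rho=\varepsilon$), $\mathrm{equals}(\gamma)$ ($\xi(\rho)=\gamma$), and "all". Instructions: $\mathrm{id}$; $\mathrm{push}_n(\gamma)$ (defined iff $\rho n\notin\mathrm{dom}(\xi)$, result $(\xi[\rho n\mapsto\gamma],\rho n)$); $\mathrm{up}_n$ (defined iff $\rho n\in\mathrm{dom}(\xi)$, result $(\xi,\rho n)$); $\mathrm{down}$ ($(\xi,\rho n)\mapsto(\xi,\rho)$); $\mathrm{set}(\gamma)$ (defined iff $\rho\ne\varepsilon$, result $(\xi[\rho\mapsto\gamma],\rho)$). Initial tree stack $(\{\varepsilon\mapsto@\},\varepsilon)$. A TSA has finite states, initial state, final states and finitely many transitions $(q,\omega,p,f,q')$ ($\omega\in\Sigma\cup\{\varepsilon\}$); $(q,c,w)\vdash_\tau(q',c',w')$ iff $w=\omega w'$, $c\in p$, $f(c)=c'$ defined. A valid run goes from (initial state, initial tree stack, $w$) to (final state, some tree stack, $\varepsilon$); $L(\mathcal{M})$ is the set of such $w$. The automaton $\mathcal{M}(G)$ with respect to a PMCFG $G=(N,\Sigma,I,R)$. Let $\bar R=\{\langle r,i,j\rangle : r=A\to[u_1,\dots,u_s](A_1,\dots,A_\ell)\in R, i\in[s], j\in\{0,\dots,|u_i|\}\}$ and $\Box$ a fresh symbol. Stack alphabet $\Gamma=\{\Box\}\cup R\cup\bar R$; states $Q=\{q,q_+,q_- : q\in\bar R\cup\{\Box\}\}$ (with $q_+,q_-$ fresh copies); initial state $\Box$; final states $\{\Box\}$.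 The transition set is the smallest set containing: (i) for every $r=S\to[u](A_1,\dots,A_\ell)\in R$ with $S\in I$: $(\Box,\varepsilon,\text{all},\mathrm{push}_1(\Box),\langle r,1,0\rangle)$, $(\langle r,1,|u|\rangle,\varepsilon,\mathrm{equals}(\Box),\mathrm{set}(r),\Box_-)$, and $(\Box_-,\varepsilon,\text{all},\mathrm{down},\Box)$; (ii) for every $r=A\to[u_1,\dots,u_s](A_1,\dots,A_\ell)\in R$, $i\in[s]$, $j\in[|u_i|]$ such that the $j$-th symbol of $u_i$ is $\sigma\in\Sigma$: $(\langle r,i,j-1\rangle,\sigma,\text{all},\mathrm{id},\langle r,i,j\rangle)$; (iii) for every $r=A\to[u_1,\dots,u_s](A_1,\dots,A_\ell)\in R$, $i\in[s]$, $j\in[|u_i|]$, $\kappa\in[\ell]$, $r'=A_\kappa\to[v_1,\dots,v_{s'}](B_1,\dots,B_{\ell'})\in R$, $m\in[s']$ such that the $j$-th symbol of $u_i$ is $x_\kappa^m$, writing $q=\langle r,i,j\rangle$: $(\langle r,i,j-1\rangle,\varepsilon,\text{all},\mathrm{push}_\kappa(q),\langle r',m,0\rangle)$, $(\langle r,i,j-1\rangle,\varepsilon,\text{all},\mathrm{up}_\kappa,q_+)$, $(q_+,\varepsilon,\mathrm{equals}(r'),\mathrm{set}(q),\langle r',m,0\rangle)$, $(\langle r',m,|v_m|\rangle,\varepsilon,\mathrm{equals}(q),\mathrm{set}(r'),q_-)$, and $(q_-,\varepsilon,\text{all},\mathrm{down},q)$. *)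

theory Defs
  imports Main
begin

text \<open>Symbols of a composition function: terminals and variables X i j standing for x_i^j
  (1-based indices i, j).\<close>
datatype 'a sym = T 'a | X nat nat

text \<open>A rule A -> [u_1,...,u_s](A_1,...,A_l) is the triple (A, [u_1,...,u_s], [A_1,...,A_l]).\<close>
type_synonym ('n,'a) rule = "'n \<times> 'a sym list list \<times> 'n list"

record ('n,'a) pmcfg =
  nonterms :: "'n set"
  sort :: "'n \<Rightarrow> nat"
  terms :: "'a set"
  initials :: "'n set"
  rules :: "('n,'a) rule set"

definition comp_fun_sort :: "'a set \<Rightarrow> 'a sym list list \<Rightarrow> nat list \<Rightarrow> nat \<Rightarrow> bool" where
  "comp_fun_sort Sig us ss s \<longleftrightarrow> length us = s \<and> (\<forall>k<length ss. 1 \<le> ss ! k) \<and> 1 \<le> s \<and>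
     (\<forall>u\<in>set us. \<forall>\<sigma>\<in>set u. case \<sigma> of T a \<Rightarrow> a \<in> Sig
        | X i j \<Rightarrow> 1 \<le> i \<and> i \<le> length ss \<and> 1 \<le> j \<and> j \<le> ss ! (i - 1))"

definition wf_pmcfg :: "('n,'a) pmcfg \<Rightarrow> bool" where
  "wf_pmcfg G \<longleftrightarrow> finite (nonterms G) \<and> finite (terms G) \<and> finite (rules G) \<and>
     (\<forall>A\<in>nonterms G. 1 \<le> sort G A) \<and>
     initials G \<subseteq> nonterms G \<and> (\<forall>S\<in>initials G. sort G S = 1) \<and>
     (\<forall>(A, us, As)\<in>rules G. A \<in> nonterms G \<and> set As \<subseteq> nonterms G \<and>
        comp_fun_sort (terms G) us (map (sort G) As) (sort G A))"

definition apply_comp :: "'a sym list list \<Rightarrow> 'a list list list \<Rightarrow> 'a list list" where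
  "apply_comp us ws = map (\<lambda>u. concat (map (\<lambda>\<sigma>. case \<sigma> of T a \<Rightarrow> [a]
        | X i j \<Rightarrow> ws ! (i - 1) ! (j - 1)) u)) us"

inductive generates :: "('n,'a) pmcfg \<Rightarrow> 'n \<Rightarrow> 'a list list \<Rightarrow> bool" for G where
  "(A, us, As) \<in> rules G \<Longrightarrow> length ws = length As \<Longrightarrow>
   (\<forall>k<length As. generates G (As ! k) (ws ! k)) \<Longrightarrow>
   generates G A (apply_comp us ws)"

definition pmcfg_lang :: "('n,'a) pmcfg \<Rightarrow> 'a list set" where
  "pmcfg_lang G = {w. \<exists>S\<in>initials G. generates G S [w]}"

datatype 'g tlab = At | Lab 'g

text \<open>Positions in N_+^* are lists of naturals; rho n is rho @ [n].\<close>
type_synonym 'g tstack = "(nat list \<Rightarrow> 'g tlab option) \<times> nat list"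

datatype 'g pred = Bottom | Equals 'g | PAll

datatype 'g instr = Id | Push nat 'g | Up nat | Down | SetI 'g

fun pred_holds :: "'g pred \<Rightarrow> 'g tstack \<Rightarrow> bool" where
  "pred_holds Bottom (\<xi>, \<rho>) = (\<rho> = [])"
| "pred_holds (Equals \<gamma>) (\<xi>, \<rho>) = (\<xi> \<rho> = Some (Lab \<gamma>))"
| "pred_holds PAll c = True"

fun instr_app :: "'g instr \<Rightarrow> 'g tstack \<Rightarrow> 'g tstack option" where
  "instr_app Id c = Some c"
| "instr_app (Push n \<gamma>) (\<xi>, \<rho>) =
     (if 0 < n \<and> \<xi> (\<rho> @ [n]) = None then Some (\<xi>(\<rho> @ [n] \<mapsto> Lab \<gamma>), \<rho> @ [n]) else None)"
| "instr_app (Up n) (\<xi>, \<rho>) =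
     (if 0 < n \<and> \<xi> (\<rho> @ [n]) \<noteq> None then Some (\<xi>, \<rho> @ [n]) else None)"
| "instr_app Down (\<xi>, \<rho>) = (if \<rho> = [] then None else Some (\<xi>, butlast \<rho>))"
| "instr_app (SetI \<gamma>) (\<xi>, \<rho>) = (if \<rho> = [] then None else Some (\<xi>(\<rho> \<mapsto> Lab \<gamma>), \<rho>))"

definition init_ts :: "'g tstack" where
  "init_ts = ([[] \<mapsto> At], [])"

text \<open>Transitions (q, omega, p, f, q'); omega = None stands for epsilon.\<close>
record ('q,'a,'g) tsa =
  states :: "'q set"
  stack_alph :: "'g set"
  init :: 'q
  finals :: "'q set"
  trans :: "('q \<times> 'a option \<times> 'g pred \<times> 'g instr \<times> 'q) set"

definition tsa_step :: "('q,'a,'g) tsa \<Rightarrow> (('q \<times> 'g tstack \<times> 'a list) \<times> ('q \<times> 'g tstack \<times> 'a list)) set" where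
  "tsa_step M = {((q, c, w), (q', c', w')). \<exists>\<omega> p f. (q, \<omega>, p, f, q') \<in> trans M \<and>
      w = (case \<omega> of None \<Rightarrow> w' | Some a \<Rightarrow> a # w') \<and> pred_holds p c \<and> instr_app f c = Some c'}"

definition tsa_lang :: "('q,'a,'g) tsa \<Rightarrow> 'a list set" where
  "tsa_lang M = {w. \<exists>qf c. ((init M, init_ts, w), (qf, c, [])) \<in> (tsa_step M)\<^sup>* \<and> qf \<in> finals M}"

datatype ('n,'a) gsym = GBox | GRule "('n,'a) rule" | GItem "('n,'a) rule" nat nat

datatype ('n,'a) qbase = QBox | QItem "('n,'a) rule" nat nat

text \<open>States q, q_+, q_-.\<close>
datatype ('n,'a) mstate = St "('n,'a) qbase" | StP "('n,'a) qbase" | StM "('n,'a) qbase"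

definition items :: "('n,'a) pmcfg \<Rightarrow> (('n,'a) rule \<times> nat \<times> nat) set" where
  "items G = {(r, i, j). r \<in> rules G \<and> 1 \<le> i \<and> i \<le> length (fst (snd r)) \<and>
                         j \<le> length (fst (snd r) ! (i - 1))}"

inductive_set mtrans :: "('n,'a) pmcfg \<Rightarrow>
    (('n,'a) mstate \<times> 'a option \<times> ('n,'a) gsym pred \<times> ('n,'a) gsym instr \<times> ('n,'a) mstate) set"
  for G where
  i1: "r = (S, [u], As) \<Longrightarrow> r \<in> rules G \<Longrightarrow> S \<in> initials G \<Longrightarrow>
       (St QBox, None, PAll, Push 1 GBox, St (QItem r 1 0)) \<in> mtrans G"
| i2: "r = (S, [u], As) \<Longrightarrow> r \<in> rules G \<Longrightarrow> S \<in> initials G \<Longrightarrow>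
       (St (QItem r 1 (length u)), None, Equals GBox, SetI (GRule r), StM QBox) \<in> mtrans G"
| i3: "r = (S, [u], As) \<Longrightarrow> r \<in> rules G \<Longrightarrow> S \<in> initials G \<Longrightarrow>
       (StM QBox, None, PAll, Down, St QBox) \<in> mtrans G"
| ii: "r = (A, us, As) \<Longrightarrow> r \<in> rules G \<Longrightarrow> 1 \<le> i \<Longrightarrow> i \<le> length us \<Longrightarrow>
       1 \<le> j \<Longrightarrow> j \<le> length (us ! (i - 1)) \<Longrightarrow> us ! (i - 1) ! (j - 1) = T \<sigma> \<Longrightarrow>
       (St (QItem r i (j - 1)), Some \<sigma>, PAll, Id, St (QItem r i j)) \<in> mtrans G"
| iii1: "r = (A, us, As) \<Longrightarrow> r \<in> rules G \<Longrightarrow> 1 \<le> i \<Longrightarrow> i \<le> length us \<Longrightarrow>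
       1 \<le> j \<Longrightarrow> j \<le> length (us ! (i - 1)) \<Longrightarrow> 1 \<le> \<kappa> \<Longrightarrow> \<kappa> \<le> length As \<Longrightarrow>
       r' = (As ! (\<kappa> - 1), vs, Bs) \<Longrightarrow> r' \<in> rules G \<Longrightarrow> 1 \<le> m \<Longrightarrow> m \<le> length vs \<Longrightarrow>
       us ! (i - 1) ! (j - 1) = X \<kappa> m \<Longrightarrow>
       (St (QItem r i (j - 1)), None, PAll, Push \<kappa> (GItem r i j), St (QItem r' m 0)) \<in> mtrans G"
| iii2: "r = (A, us, As) \<Longrightarrow> r \<in> rules G \<Longrightarrow> 1 \<le> i \<Longrightarrow> i \<le> length us \<Longrightarrow>
       1 \<le> j \<Longrightarrow> j \<le> length (us ! (i - 1)) \<Longrightarrow> 1 \<le> \<kappa> \<Longrightarrow> \<kappa> \<le> length As \<Longrightarrow>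
       r' = (As ! (\<kappa> - 1), vs, Bs) \<Longrightarrow> r' \<in> rules G \<Longrightarrow> 1 \<le> m \<Longrightarrow> m \<le> length vs \<Longrightarrow>
       us ! (i - 1) ! (j - 1) = X \<kappa> m \<Longrightarrow>
       (St (QItem r i (j - 1)), None, PAll, Up \<kappa>, StP (QItem r i j)) \<in> mtrans G"
| iii3: "r = (A, us, As) \<Longrightarrow> r \<in> rules G \<Longrightarrow> 1 \<le> i \<Longrightarrow> i \<le> length us \<Longrightarrow>
       1 \<le> j \<Longrightarrow> j \<le> length (us ! (i - 1)) \<Longrightarrow> 1 \<le> \<kappa> \<Longrightarrow> \<kappa> \<le> length As \<Longrightarrow>
       r' = (As ! (\<kappa> - 1), vs, Bs) \<Longrightarrow> r' \<in> rules G \<Longrightarrow> 1 \<le> m \<Longrightarrow> m \<le> length vs \<Longrightarrow>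
       us ! (i - 1) ! (j - 1) = X \<kappa> m \<Longrightarrow>
       (StP (QItem r i j), None, Equals (GRule r'), SetI (GItem r i j), St (QItem r' m 0)) \<in> mtrans G"
| iii4: "r = (A, us, As) \<Longrightarrow> r \<in> rules G \<Longrightarrow> 1 \<le> i \<Longrightarrow> i \<le> length us \<Longrightarrow>
       1 \<le> j \<Longrightarrow> j \<le> length (us ! (i - 1)) \<Longrightarrow> 1 \<le> \<kappa> \<Longrightarrow> \<kappa> \<le> length As \<Longrightarrow>
       r' = (As ! (\<kappa> - 1), vs, Bs) \<Longrightarrow> r' \<in> rules G \<Longrightarrow> 1 \<le> m \<Longrightarrow> m \<le> length vs \<Longrightarrow>
       us ! (i - 1) ! (j - 1) = X \<kappa> m \<Longrightarrow>
       (St (QItem r' m (length (vs ! (m - 1)))), None, Equals (GItem r i j), SetI (GRule r'),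
        StM (QItem r i j)) \<in> mtrans G"
| iii5: "r = (A, us, As) \<Longrightarrow> r \<in> rules G \<Longrightarrow> 1 \<le> i \<Longrightarrow> i \<le> length us \<Longrightarrow>
       1 \<le> j \<Longrightarrow> j \<le> length (us ! (i - 1)) \<Longrightarrow> 1 \<le> \<kappa> \<Longrightarrow> \<kappa> \<le> length As \<Longrightarrow>
       r' = (As ! (\<kappa> - 1), vs, Bs) \<Longrightarrow> r' \<in> rules G \<Longrightarrow> 1 \<le> m \<Longrightarrow> m \<le> length vs \<Longrightarrow>
       us ! (i - 1) ! (j - 1) = X \<kappa> m \<Longrightarrow>
       (StM (QItem r i j), None, PAll, Down, St (QItem r i j)) \<in> mtrans G"

definition automaton :: "('n,'a) pmcfg \<Rightarrow> (('n,'a) mstate, 'a, ('n,'a) gsym) tsa" where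
  "automaton G =
    \<lparr> states = (let Qb = {QBox} \<union> {QItem r i j | r i j. (r, i, j) \<in> items G}
               in St ` Qb \<union> StP ` Qb \<union> StM ` Qb),
      stack_alph = {GBox} \<union> GRule ` rules G \<union> {GItem r i j | r i j. (r, i, j) \<in> items G},
      init = St QBox,
      finals = {St QBox},
      trans = mtrans G \<rparr>"

end

theory Submission
  imports Defs
begin

datatype ('n,'a) dtree = DNode (drule: "('n,'a) rule") (dch: "('n,'a) dtree list")

inductive deriv :: "('n,'a) pmcfg \<Rightarrow> ('n,'a) dtree \<Rightarrow> 'n \<Rightarrow> 'a list list \<Rightarrow> bool" for G where
 "(A, us, As) \<in> rules G \<Longrightarrow> length ws = length As \<Longrightarrow> length ds = length As \<Longrightarrow>
  (\<forall>k<length As. deriv G (ds!k) (As!k) (ws!k)) \<Longrightarrow> deriv G (DNode (A,us,As) ds) A (apply_comp us ws)"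

lemma gen_deriv: "generates G A t \<Longrightarrow> \<exists>d. deriv G d A t"
proof (induction rule: generates.induct)
  case (1 A us As ws)
  define ds where "ds = map (\<lambda>k. SOME d. deriv G d (As!k) (ws!k)) [0..<length As]"
  have "\<forall>k<length As. deriv G (ds!k) (As!k) (ws!k)"
    using 1(3) by (auto simp: ds_def intro: someI_ex)
  then have "deriv G (DNode (A,us,As) ds) A (apply_comp us ws)"
    using 1 by (intro deriv.intros) (auto simp: ds_def)
  then show ?case by blast
qed

inductive cons :: "('n,'a) dtree \<Rightarrow> (nat list \<Rightarrow> ('n,'a) gsym tlab option) \<Rightarrow> nat list \<Rightarrow> bool" where
 "(\<forall>k<length ch. (\<forall>q. \<xi> (\<rho> @ Suc k # q) = None) \<or>
     (\<xi> (\<rho> @ [Suc k]) = Some (Lab (GRule (drule (ch!k)))) \<and> cons (ch!k) \<xi> (\<rho> @ [Suc k])))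
  \<Longrightarrow> cons (DNode r ch) \<xi> \<rho>"

lemma cons_frame: "cons d \<xi> \<rho> \<Longrightarrow> (\<forall>k q. \<xi>' (\<rho> @ k # q) = \<xi> (\<rho> @ k # q)) \<Longrightarrow> cons d \<xi>' \<rho>"
proof (induction arbitrary: \<xi>' rule: cons.induct)
  case (1 ch \<xi> \<rho> r)
  show ?case
  proof (rule cons.intros, intro allI impI)
    fix k assume k: "k < length ch"
    have h: "\<forall>k' q. \<xi>' ((\<rho> @ [Suc k]) @ k' # q) = \<xi> ((\<rho> @ [Suc k]) @ k' # q)"
      using 1(2) by simp
    from 1(1) k show "(\<forall>q. \<xi>' (\<rho> @ Suc k # q) = None) \<or>
     (\<xi>' (\<rho> @ [Suc k]) = Some (Lab (GRule (drule (ch!k)))) \<and> cons (ch!k) \<xi>' (\<rho> @ [Suc k]))"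
      using 1(2) h by auto
  qed
qed

lemma cons_empty: "(\<forall>k q. \<xi> (\<rho> @ k # q) = None) \<Longrightarrow> cons d \<xi> \<rho>"
proof (induction d arbitrary: \<rho>)
  case (DNode r ch)
  show ?case by (rule cons.intros) (use DNode.prems in auto)
qed

lemma stepI: "(q,\<omega>,p,f,q') \<in> mtrans G \<Longrightarrow> pred_holds p c \<Longrightarrow> instr_app f c = Some c' \<Longrightarrow>
   w = (case \<omega> of None \<Rightarrow> w' | Some a \<Rightarrow> a # w') \<Longrightarrow>
   ((q,c,w),(q',c',w')) \<in> tsa_step (automaton G)"
  by (auto simp: tsa_step_def automaton_def)

definition frame :: "nat list \<Rightarrow> (nat list \<Rightarrow> 'x option) \<Rightarrow> (nat list \<Rightarrow> 'x option) \<Rightarrow> bool" where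
  "frame \<rho> \<xi>' \<xi> \<longleftrightarrow> (\<forall>p. (\<forall>k q. p \<noteq> \<rho> @ k # q) \<longrightarrow> \<xi>' p = \<xi> p)"

definition sim_prop :: "('n,'a) pmcfg \<Rightarrow> ('n,'a) dtree \<Rightarrow> 'a list list \<Rightarrow> bool" where
  "sim_prop G d t \<longleftrightarrow> (\<forall>m w \<xi> \<rho>. 1 \<le> m \<longrightarrow> m \<le> length t \<longrightarrow> cons d \<xi> \<rho> \<longrightarrow>
     (\<exists>\<xi>'. ((St (QItem (drule d) m 0), (\<xi>,\<rho>), t!(m-1) @ w),
             (St (QItem (drule d) m (length (fst (snd (drule d)) ! (m-1)))), (\<xi>',\<rho>), w))
            \<in> (tsa_step (automaton G))\<^sup>* \<and> cons d \<xi>' \<rho> \<and> \<xi>' \<rho> = \<xi> \<rho> \<and> frame \<rho> \<xi>' \<xi>))"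

lemma frame_trans: "frame \<rho> \<xi>1 \<xi>2 \<Longrightarrow> frame \<rho> \<xi>2 \<xi>3 \<Longrightarrow> frame \<rho> \<xi>1 \<xi>3"
  by (auto simp: frame_def)

lemma length_apply_comp[simp]: "length (apply_comp us ws) = length us"
  by (simp add: apply_comp_def)

lemma loop:
  assumes wf: "wf_pmcfg G" and r: "(A,us,As) \<in> rules G" and lws: "length ws = length As"
    and lds: "length ds = length As"
    and ch: "\<forall>k<length As. deriv G (ds!k) (As!k) (ws!k) \<and> sim_prop G (ds!k) (ws!k)"
    and m: "1 \<le> m" "m \<le> length us"
  shows "j \<le> length (us!(m-1)) \<Longrightarrow> cons (DNode (A,us,As) ds) \<xi> \<rho> \<Longrightarrow>
    \<exists>\<xi>'. ((St (QItem (A,us,As) m 0), (\<xi>,\<rho>),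
       concat (map (\<lambda>\<sigma>. case \<sigma> of T a \<Rightarrow> [a] | X i j \<Rightarrow> ws!(i-1)!(j-1)) (take j (us!(m-1)))) @ w),
      (St (QItem (A,us,As) m j), (\<xi>',\<rho>), w)) \<in> (tsa_step (automaton G))\<^sup>* \<and>
      cons (DNode (A,us,As) ds) \<xi>' \<rho> \<and> \<xi>' \<rho> = \<xi> \<rho> \<and> frame \<rho> \<xi>' \<xi>"
proof (induction j arbitrary: w)
  case 0
  then show ?case by (auto simp: frame_def)
next
  case (Suc j)
  define u where "u = us!(m-1)"
  define f where "f = (\<lambda>\<sigma>. case \<sigma> of T a \<Rightarrow> [a] | X i j \<Rightarrow> ws!(i-1)!(j-1))"
  let ?r = "(A,us,As)"
  let ?d = "DNode ?r ds"
  let ?S = "tsa_step (automaton G)"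
  have jl: "j < length u" using Suc.prems u_def by simp
  have tk: "take (Suc j) u = take j u @ [u!j]" using jl by (simp add: take_Suc_conv_app_nth)
  obtain \<xi>j where run1: "((St (QItem ?r m 0), (\<xi>,\<rho>), concat (map f (take j u)) @ (f (u!j) @ w)),
        (St (QItem ?r m j), (\<xi>j,\<rho>), f (u!j) @ w)) \<in> ?S\<^sup>*" and cj: "cons ?d \<xi>j \<rho>"
    and eqj: "\<xi>j \<rho> = \<xi> \<rho>" and fj: "frame \<rho> \<xi>j \<xi>"
  proof -
    have jj: "j \<le> length (us!(m-1))" using Suc.prems by simp
    have "\<exists>\<xi>'. ((St (QItem ?r m 0), (\<xi>,\<rho>), concat (map f (take j u)) @ (f (u!j) @ w)),
        (St (QItem ?r m j), (\<xi>',\<rho>), f (u!j) @ w)) \<in> ?S\<^sup>* \<and> cons ?d \<xi>' \<rho> \<and> \<xi>' \<rho> = \<xi> \<rho> \<and> frame \<rho> \<xi>' \<xi>"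
      using Suc.IH[of "f (u!j) @ w", OF jj Suc.prems(2)] unfolding f_def u_def .
    then show ?thesis using that by blast
  qed
  have "\<exists>\<xi>'. ((St (QItem ?r m j), (\<xi>j,\<rho>), f (u!j) @ w), (St (QItem ?r m (Suc j)), (\<xi>',\<rho>), w)) \<in> ?S\<^sup>*
     \<and> cons ?d \<xi>' \<rho> \<and> \<xi>' \<rho> = \<xi>j \<rho> \<and> frame \<rho> \<xi>' \<xi>j"
  proof (cases "u!j")
    case (T a)
    have "(St (QItem ?r m (Suc j - 1)), Some a, PAll, Id, St (QItem ?r m (Suc j))) \<in> mtrans G"
      by (rule mtrans.ii[OF refl r]) (use m jl T u_def in auto)
    then have "((St (QItem ?r m j), (\<xi>j,\<rho>), f (u!j) @ w), (St (QItem ?r m (Suc j)), (\<xi>j,\<rho>), w)) \<in> ?S"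
      by (intro stepI) (auto simp: f_def T)
    then show ?thesis using cj by (auto simp: frame_def)
  next
    case (X \<kappa> mm)
    have "u \<in> set us" using m u_def by auto
    moreover have "u!j \<in> set u" using jl by auto
    ultimately have cf0: "1 \<le> \<kappa> \<and> \<kappa> \<le> length As \<and> 1 \<le> mm \<and> mm \<le> map (sort G) As ! (\<kappa>-1)"
      using wf r X unfolding wf_pmcfg_def comp_fun_sort_def by fastforce
    then have cf: "1 \<le> \<kappa>" "\<kappa> \<le> length As" "1 \<le> mm" "mm \<le> sort G (As!(\<kappa>-1))" by auto
    define c where "c = ds!(\<kappa>-1)"
    have dc: "deriv G c (As!(\<kappa>-1)) (ws!(\<kappa>-1))" and sc: "sim_prop G c (ws!(\<kappa>-1))"
      using ch cf c_def by auto
    from dc obtain vs Bs ds' ws' where cdef: "c = DNode (As!(\<kappa>-1), vs, Bs) ds'"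
      and r': "(As!(\<kappa>-1), vs, Bs) \<in> rules G" and wsk: "ws!(\<kappa>-1) = apply_comp vs ws'"
      by (cases rule: deriv.cases) auto
    have lvs: "length vs = sort G (As!(\<kappa>-1))"
      using wf r' unfolding wf_pmcfg_def comp_fun_sort_def by fastforce
    let ?r' = "(As!(\<kappa>-1), vs, Bs)"
    define \<gamma> where "\<gamma> = GItem ?r m (Suc j)"
    define \<xi>'' where "\<xi>'' = \<xi>j(\<rho>@[\<kappa>] \<mapsto> Lab \<gamma>)"
    have call: "\<forall>k<length ds. (\<forall>q. \<xi>j (\<rho> @ Suc k # q) = None) \<or> (\<xi>j (\<rho> @ [Suc k]) = Some (Lab (GRule (drule (ds!k)))) \<and> cons (ds!k) \<xi>j (\<rho> @ [Suc k]))"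
      using cj by (cases rule: cons.cases) auto
    have dsk: "ds!(\<kappa>-1) = c" by (simp add: c_def)
    have sk: "Suc (\<kappa>-1) = \<kappa>" using cf by simp
    have cases0: "(\<forall>q. \<xi>j (\<rho> @ \<kappa> # q) = None) \<or> (\<xi>j (\<rho> @ [\<kappa>]) = Some (Lab (GRule (drule (ds!(\<kappa>-1))))) \<and> cons (ds!(\<kappa>-1)) \<xi>j (\<rho> @ [\<kappa>]))"
      using call[rule_format, of "\<kappa>-1"] cf lds sk by simp
    have P2: "((St (QItem ?r m j), (\<xi>j,\<rho>), f (u!j) @ w), (St (QItem ?r' mm 0), (\<xi>'',\<rho>@[\<kappa>]), f (u!j) @ w)) \<in> ?S\<^sup>*
       \<and> cons c \<xi>'' (\<rho>@[\<kappa>])"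
    proof (cases "\<forall>q. \<xi>j (\<rho> @ \<kappa> # q) = None")
      case True
      have "(St (QItem ?r m (Suc j - 1)), None, PAll, Push \<kappa> \<gamma>, St (QItem ?r' mm 0)) \<in> mtrans G"
        unfolding \<gamma>_def
        by (rule mtrans.iii1[OF refl r _ _ _ _ _ _ refl r']) (use m jl X u_def cf lvs in auto)
      then have "((St (QItem ?r m j), (\<xi>j,\<rho>), f (u!j) @ w), (St (QItem ?r' mm 0), (\<xi>'',\<rho>@[\<kappa>]), f (u!j) @ w)) \<in> ?S"
        by (intro stepI) (use True cf in \<open>auto simp: \<xi>''_def\<close>)
      moreover have "cons c \<xi>'' (\<rho>@[\<kappa>])"
        by (rule cons_empty) (use True in \<open>auto simp: \<xi>''_def\<close>)
      ultimately show ?thesis by auto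
    next
      case False
      then have lab: "\<xi>j (\<rho> @ [\<kappa>]) = Some (Lab (GRule ?r'))" and cc: "cons c \<xi>j (\<rho> @ [\<kappa>])"
        using cases0 False unfolding dsk by (auto simp: cdef)
      have "(St (QItem ?r m (Suc j - 1)), None, PAll, Up \<kappa>, StP (QItem ?r m (Suc j))) \<in> mtrans G"
        by (rule mtrans.iii2[OF refl r _ _ _ _ _ _ refl r']) (use m jl X u_def cf lvs in auto)
      then have s1: "((St (QItem ?r m j), (\<xi>j,\<rho>), f (u!j) @ w), (StP (QItem ?r m (Suc j)), (\<xi>j,\<rho>@[\<kappa>]), f (u!j) @ w)) \<in> ?S"
        by (intro stepI) (use lab cf in \<open>auto\<close>)
      have "(StP (QItem ?r m (Suc j)), None, Equals (GRule ?r'), SetI \<gamma>, St (QItem ?r' mm 0)) \<in> mtrans G"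
        unfolding \<gamma>_def
        by (rule mtrans.iii3[OF refl r _ _ _ _ _ _ refl r']) (use m jl X u_def cf lvs in auto)
      then have s2: "((StP (QItem ?r m (Suc j)), (\<xi>j,\<rho>@[\<kappa>]), f (u!j) @ w), (St (QItem ?r' mm 0), (\<xi>'',\<rho>@[\<kappa>]), f (u!j) @ w)) \<in> ?S"
        by (intro stepI) (use lab cf in \<open>auto simp: \<xi>''_def\<close>)
      have "cons c \<xi>'' (\<rho>@[\<kappa>])"
        by (rule cons_frame[OF cc]) (auto simp: \<xi>''_def)
      with s1 s2 show ?thesis by auto
    qed
    have mmw: "1 \<le> mm" "mm \<le> length (ws!(\<kappa>-1))" using cf lvs wsk by auto
    have ex3: "\<exists>\<xi>3. ((St (QItem (drule c) mm 0), (\<xi>'',\<rho>@[\<kappa>]), ws!(\<kappa>-1)!(mm-1) @ w),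
        (St (QItem (drule c) mm (length (fst (snd (drule c)) ! (mm-1)))), (\<xi>3,\<rho>@[\<kappa>]), w)) \<in> ?S\<^sup>*
      \<and> cons c \<xi>3 (\<rho>@[\<kappa>]) \<and> \<xi>3 (\<rho>@[\<kappa>]) = \<xi>'' (\<rho>@[\<kappa>]) \<and> frame (\<rho>@[\<kappa>]) \<xi>3 \<xi>''"
      using sc[unfolded sim_prop_def, rule_format, OF mmw conjunct2[OF P2], of w] .
    have dr: "drule c = ?r'" by (simp add: cdef)
    obtain \<xi>3 where run3: "((St (QItem ?r' mm 0), (\<xi>'',\<rho>@[\<kappa>]), ws!(\<kappa>-1)!(mm-1) @ w),
        (St (QItem ?r' mm (length (vs!(mm-1)))), (\<xi>3,\<rho>@[\<kappa>]), w)) \<in> ?S\<^sup>*"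
      and c3: "cons c \<xi>3 (\<rho>@[\<kappa>])" and e3: "\<xi>3 (\<rho>@[\<kappa>]) = \<xi>'' (\<rho>@[\<kappa>])" and f3: "frame (\<rho>@[\<kappa>]) \<xi>3 \<xi>''"
      using ex3 unfolding dr fst_conv snd_conv by blast
    define \<xi>4 where "\<xi>4 = \<xi>3(\<rho>@[\<kappa>] \<mapsto> Lab (GRule ?r'))"
    have "(St (QItem ?r' mm (length (vs!(mm-1)))), None, Equals \<gamma>, SetI (GRule ?r'), StM (QItem ?r m (Suc j))) \<in> mtrans G"
      unfolding \<gamma>_def
      by (rule mtrans.iii4[OF refl r _ _ _ _ _ _ refl r']) (use m jl X u_def cf lvs in auto)
    then have s4: "((St (QItem ?r' mm (length (vs!(mm-1)))), (\<xi>3,\<rho>@[\<kappa>]), w), (StM (QItem ?r m (Suc j)), (\<xi>4,\<rho>@[\<kappa>]), w)) \<in> ?S"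
      by (intro stepI) (use e3 in \<open>auto simp: \<xi>''_def \<xi>4_def\<close>)
    have "(StM (QItem ?r m (Suc j)), None, PAll, Down, St (QItem ?r m (Suc j))) \<in> mtrans G"
      by (rule mtrans.iii5[OF refl r _ _ _ _ _ _ refl r']) (use m jl X u_def cf lvs in auto)
    then have s5: "((StM (QItem ?r m (Suc j)), (\<xi>4,\<rho>@[\<kappa>]), w), (St (QItem ?r m (Suc j)), (\<xi>4,\<rho>), w)) \<in> ?S"
      by (intro stepI) auto
    have fu: "f (u!j) = ws!(\<kappa>-1)!(mm-1)" by (simp add: f_def X)
    have run: "((St (QItem ?r m j), (\<xi>j,\<rho>), f (u!j) @ w), (St (QItem ?r m (Suc j)), (\<xi>4,\<rho>), w)) \<in> ?S\<^sup>*"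
    proof -
      have p2: "((St (QItem ?r m j), (\<xi>j,\<rho>), ws!(\<kappa>-1)!(mm-1) @ w), (St (QItem ?r' mm 0), (\<xi>'',\<rho>@[\<kappa>]), ws!(\<kappa>-1)!(mm-1) @ w)) \<in> ?S\<^sup>*"
        using conjunct1[OF P2] unfolding fu .
      show ?thesis unfolding fu
        by (rule rtrancl_into_rtrancl[OF rtrancl_into_rtrancl[OF rtrancl_trans[OF p2 run3] s4] s5])
    qed
    have agree: "\<forall>p. (\<forall>q. p \<noteq> \<rho> @ \<kappa> # q) \<longrightarrow> \<xi>4 p = \<xi>j p"
    proof (intro allI impI)
      fix p assume np: "\<forall>q. p \<noteq> \<rho> @ \<kappa> # q"
      then have "\<forall>k q. p \<noteq> (\<rho>@[\<kappa>]) @ k # q" by simp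
      then have "\<xi>3 p = \<xi>'' p" using f3 unfolding frame_def by blast
      then show "\<xi>4 p = \<xi>j p" using np[rule_format, of "[]"] by (simp add: \<xi>4_def \<xi>''_def)
    qed
    have c4: "cons ?d \<xi>4 \<rho>"
    proof (rule cons.intros, intro allI impI)
      fix k assume k: "k < length ds"
      show "(\<forall>q. \<xi>4 (\<rho> @ Suc k # q) = None) \<or>
       (\<xi>4 (\<rho> @ [Suc k]) = Some (Lab (GRule (drule (ds!k)))) \<and> cons (ds!k) \<xi>4 (\<rho> @ [Suc k]))"
      proof (cases "Suc k = \<kappa>")
        case True
        then have "ds!k = c" using c_def by auto
        moreover have "cons c \<xi>4 (\<rho>@[\<kappa>])"
          by (rule cons_frame[OF c3]) (auto simp: \<xi>4_def)
        ultimately show ?thesis using True by (auto simp: \<xi>4_def cdef)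
      next
        case False
        have ag: "\<forall>k' q. \<xi>4 (\<rho> @ Suc k # q) = \<xi>j (\<rho> @ Suc k # q)"
          using agree False by auto
        have "(\<forall>q. \<xi>j (\<rho> @ Suc k # q) = None) \<or>
         (\<xi>j (\<rho> @ [Suc k]) = Some (Lab (GRule (drule (ds!k)))) \<and> cons (ds!k) \<xi>j (\<rho> @ [Suc k]))"
          using cj k by (cases rule: cons.cases) auto
        then show ?thesis
        proof
          assume "\<forall>q. \<xi>j (\<rho> @ Suc k # q) = None" then show ?thesis using ag by auto
        next
          assume h: "\<xi>j (\<rho> @ [Suc k]) = Some (Lab (GRule (drule (ds!k)))) \<and> cons (ds!k) \<xi>j (\<rho> @ [Suc k])"
          have "cons (ds!k) \<xi>4 (\<rho> @ [Suc k])"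
            by (rule cons_frame[OF conjunct2[OF h]]) (use ag in auto)
          then show ?thesis using h ag by auto
        qed
      qed
    qed
    have "\<xi>4 \<rho> = \<xi>j \<rho>" using agree by auto
    moreover have "frame \<rho> \<xi>4 \<xi>j" using agree unfolding frame_def by auto
    ultimately show ?thesis using run c4 by blast
  qed
  then obtain \<xi>' where r2: "((St (QItem ?r m j), (\<xi>j,\<rho>), f (u!j) @ w), (St (QItem ?r m (Suc j)), (\<xi>',\<rho>), w)) \<in> ?S\<^sup>*"
     and "cons ?d \<xi>' \<rho>" "\<xi>' \<rho> = \<xi>j \<rho>" "frame \<rho> \<xi>' \<xi>j" by blast
  have rr: "((St (QItem ?r m 0), (\<xi>,\<rho>), concat (map f (take (Suc j) u)) @ w), (St (QItem ?r m (Suc j)), (\<xi>',\<rho>), w)) \<in> ?S\<^sup>*"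
    unfolding tk using rtrancl_trans[OF run1 r2] by simp
  have fin: "\<exists>\<xi>'. ((St (QItem ?r m 0), (\<xi>,\<rho>), concat (map f (take (Suc j) u)) @ w), (St (QItem ?r m (Suc j)), (\<xi>',\<rho>), w)) \<in> ?S\<^sup>*
     \<and> cons ?d \<xi>' \<rho> \<and> \<xi>' \<rho> = \<xi> \<rho> \<and> frame \<rho> \<xi>' \<xi>"
    using rr r2 eqj fj frame_trans[OF \<open>frame \<rho> \<xi>' \<xi>j\<close> fj] \<open>cons ?d \<xi>' \<rho>\<close> \<open>\<xi>' \<rho> = \<xi>j \<rho>\<close> by auto
  show ?case using fin unfolding f_def u_def .
qed

lemma sim: "deriv G d A t \<Longrightarrow> wf_pmcfg G \<Longrightarrow> sim_prop G d t"
proof (induction rule: deriv.induct)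
  case (1 A us As ws ds)
  have ch: "\<forall>k<length As. deriv G (ds!k) (As!k) (ws!k) \<and> sim_prop G (ds!k) (ws!k)"
    using 1 by blast
  show ?case unfolding sim_prop_def
  proof (intro allI impI)
    fix m w \<xi> \<rho> assume m1: "1 \<le> m" and ml: "m \<le> length (apply_comp us ws)"
      and c: "cons (DNode (A,us,As) ds) \<xi> \<rho>"
    have ml': "m \<le> length us" using ml by simp
    have ac: "apply_comp us ws ! (m-1) = concat (map (\<lambda>\<sigma>. case \<sigma> of T a \<Rightarrow> [a] | X i j \<Rightarrow> ws!(i-1)!(j-1)) (us!(m-1)))"
      using m1 ml' by (simp add: apply_comp_def)
    note L = loop[OF 1(5) 1(1) 1(2) 1(3) ch m1 ml' order_refl c, of w]
    show "\<exists>\<xi>'. ((St (QItem (drule (DNode (A, us, As) ds)) m 0), (\<xi>, \<rho>), apply_comp us ws ! (m - 1) @ w),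
               St (QItem (drule (DNode (A, us, As) ds)) m (length (fst (snd (drule (DNode (A, us, As) ds))) ! (m - 1)))),
               (\<xi>', \<rho>), w) \<in> (tsa_step (automaton G))\<^sup>* \<and>
              cons (DNode (A, us, As) ds) \<xi>' \<rho> \<and> \<xi>' \<rho> = \<xi> \<rho> \<and> frame \<rho> \<xi>' \<xi>"
      using L unfolding ac dtree.sel fst_conv snd_conv take_all[OF order_refl] .
  qed
qed

theorem mainTheorem5:
  fixes G :: "('n, 'a) pmcfg"
  assumes "wf_pmcfg G"
  shows "pmcfg_lang G \<subseteq> tsa_lang (automaton G)"
proof
  fix w assume "w \<in> pmcfg_lang G"
  then obtain S where S: "S \<in> initials G" and g: "generates G S [w]" by (auto simp: pmcfg_lang_def)
  obtain d where d: "deriv G d S [w]" using gen_deriv[OF g] by blast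
  then obtain us As ds ws where dd: "d = DNode (S, us, As) ds" and r: "(S, us, As) \<in> rules G"
    and wv: "[w] = apply_comp us ws"
    by (cases rule: deriv.cases) auto
  have "length us = 1" using arg_cong[OF wv, of length] by simp
  then obtain u where u: "us = [u]" by (auto simp: length_Suc_conv)
  let ?r = "(S, us, As)"
  let ?S = "tsa_step (automaton G)"
  define \<xi>1 where "\<xi>1 = [([]::nat list) \<mapsto> At, [1] \<mapsto> Lab (GBox :: ('n,'a) gsym)]"
  have sp: "sim_prop G d [w]" using sim[OF d assms] .
  have c1: "cons d \<xi>1 [1]" by (rule cons_empty) (auto simp: \<xi>1_def)
  obtain \<xi>' where run: "((St (QItem ?r 1 0), (\<xi>1, [1]), [w] ! (1-1) @ []),
       (St (QItem ?r 1 (length (us ! (1-1)))), (\<xi>', [1]), [])) \<in> ?S\<^sup>*"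
    and e: "\<xi>' [1] = \<xi>1 [1]"
    using sp[unfolded sim_prop_def, rule_format, of 1 \<xi>1 "[1]" "[]", OF _ _ c1] by (auto simp: dd)
  have t1: "(St QBox, None, PAll, Push 1 GBox, St (QItem ?r 1 0)) \<in> mtrans G"
    by (rule mtrans.i1[OF _ r S]) (simp add: u)
  have s1: "((St QBox, init_ts, w), (St (QItem ?r 1 0), (\<xi>1, [1]), w)) \<in> ?S"
    by (rule stepI[OF t1]) (auto simp: init_ts_def \<xi>1_def)
  have t2: "(St (QItem ?r 1 (length u)), None, Equals GBox, SetI (GRule ?r), StM QBox) \<in> mtrans G"
    by (rule mtrans.i2[OF _ r S]) (simp add: u)
  have s2: "((St (QItem ?r 1 (length u)), (\<xi>', [1]), []), (StM QBox, (\<xi>'([1] \<mapsto> Lab (GRule ?r)), [1]), [])) \<in> ?S"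
    by (rule stepI[OF t2]) (use e in \<open>auto simp: \<xi>1_def\<close>)
  have t3: "(StM QBox, None, PAll, Down, St QBox) \<in> mtrans G"
    by (rule mtrans.i3[OF _ r S]) (simp add: u)
  have s3: "((StM QBox, (\<xi>'([1] \<mapsto> Lab (GRule ?r)), [1]), []), (St QBox, (\<xi>'([1] \<mapsto> Lab (GRule ?r)), []), [])) \<in> ?S"
    by (rule stepI[OF t3]) auto
  have run': "((St (QItem ?r 1 0), (\<xi>1, [1]), w), (St (QItem ?r 1 (length u)), (\<xi>', [1]), [])) \<in> ?S\<^sup>*"
    using run by (simp add: u)
  have "((St QBox, init_ts, w), (St QBox, (\<xi>'([1] \<mapsto> Lab (GRule ?r)), []), [])) \<in> ?S\<^sup>*"
    by (rule rtrancl_into_rtrancl[OF rtrancl_into_rtrancl[OF converse_rtrancl_into_rtrancl[OF s1 run'] s2] s3])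
  moreover have "init (automaton G) = St QBox" "finals (automaton G) = {St QBox}"
    by (simp_all add: automaton_def)
  ultimately show "w \<in> tsa_lang (automaton G)" unfolding tsa_lang_def by auto
qed

end
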